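(* Let $a_{21}^0(u)=45u+608u^3-512u^5+16u(28u^2-3)\cos4u+3u\cos8u+12\sin4u-432u^2\sin4u+256u^4\sin4u-6\sin8u$. Then $a_{21}^0(u)<0$ for all $u>0$. *)

theory Defs
  imports Complex_Main
begin

end

theory Submission
  imports Defs
begin

fun pe :: "real list \<Rightarrow> real \<Rightarrow> real" where
  "pe [] x = 0" | "pe (c#cs) x = c + x * pe cs x"

fun padd :: "real list \<Rightarrow> real list \<Rightarrow> real list" where
  "padd [] q = q" | "padd p [] = p" | "padd (a#p) (b#q) = (a+b) # padd p q"

fun pmul :: "real list \<Rightarrow> real list \<Rightarrow> real list" where
  "pmul [] q = []" | "pmul (a#p) q = padd (map ((*) a) q) (0 # pmul p q)"

fun dl :: "real \<Rightarrow> real list \<Rightarrow> real list" where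
  "dl k [] = []" | "dl k (c#cs) = (k * \<bar>c\<bar>) # dl (k+1) cs"

lemma pe_padd: "pe (padd p q) x = pe p x + pe q x"
  by (induction p q rule: padd.induct) (auto simp: algebra_simps)

lemma pe_map_mult: "pe (map ((*) a) q) x = a * pe q x"
  by (induction q) (auto simp: algebra_simps)

lemma pe_pmul: "pe (pmul p q) x = pe p x * pe q x"
  by (induction p) (auto simp: pe_padd pe_map_mult algebra_simps)

lemma pe_rep: "pe (replicate n 0 @ cs) x = x^n * pe cs x"
  by (induction n) auto

lemma pe_mono: "list_all2 (\<le>) p q \<Longrightarrow> 0 \<le> x \<Longrightarrow> pe p x \<le> pe q x"
proof (induction p arbitrary: q)
  case Nil then show ?case by simp
next
  case (Cons a p)
  then obtain b q' where q: "q = b # q'" and ab: "a \<le> b" and r: "list_all2 (\<le>) p q'"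
    by (cases q) auto
  have "x * pe p x \<le> x * pe q' x" using Cons.IH[OF r Cons.prems(2)] Cons.prems(2)
    by (simp add: mult_left_mono)
  then show ?case using q ab by simp
qed

lemma pe_abs_nonneg: "0 \<le> b \<Longrightarrow> 0 \<le> pe (map abs cs) b"
  by (induction cs) auto

lemma pe_abs: "\<bar>x\<bar> \<le> b \<Longrightarrow> \<bar>pe cs x\<bar> \<le> pe (map abs cs) b"
proof (induction cs)
  case Nil then show ?case by simp
next
  case (Cons c cs)
  have b0: "0 \<le> b" using Cons.prems by linarith
  have "\<bar>x * pe cs x\<bar> \<le> b * pe (map abs cs) b"
    unfolding abs_mult using Cons b0 by (intro mult_mono) auto
  then show ?case by (simp add: abs_triangle_ineq order_trans[OF abs_triangle_ineq])
qed

lemma pe_dl: "pe (dl (k+1) cs) b = pe (dl k cs) b + pe (map abs cs) b"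
proof (induction cs arbitrary: k)
  case Nil show ?case by simp
next
  case (Cons c cs)
  have "pe (dl (k+1+1) cs) b = pe (dl (k+1) cs) b + pe (map abs cs) b" by (rule Cons.IH)
  then show ?case by (simp add: algebra_simps)
qed

lemma pe_dl_nonneg: "0 \<le> b \<Longrightarrow> 0 \<le> k \<Longrightarrow> 0 \<le> pe (dl k cs) b"
  by (induction cs arbitrary: k) auto

lemma pe_lip:
  assumes "\<bar>x\<bar> \<le> b" "\<bar>a\<bar> \<le> b"
  shows "\<bar>pe (c#cs) x - pe (c#cs) a\<bar> \<le> \<bar>x - a\<bar> * pe (dl 1 cs) b"
  using assms
proof (induction cs arbitrary: c)
  case Nil then show ?case by simp
next
  case (Cons c' cs)
  have b0: "0 \<le> b" using Cons.prems by linarith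
  have IH: "\<bar>pe (c'#cs) x - pe (c'#cs) a\<bar> \<le> \<bar>x - a\<bar> * pe (dl 1 cs) b"
    using Cons by blast
  have e: "pe (c#c'#cs) x - pe (c#c'#cs) a = (x - a) * pe (c'#cs) x + a * (pe (c'#cs) x - pe (c'#cs) a)"
    by (simp only: pe.simps) (simp add: algebra_simps)
  have t1: "\<bar>(x - a) * pe (c'#cs) x\<bar> \<le> \<bar>x - a\<bar> * pe (map abs (c'#cs)) b"
    unfolding abs_mult by (intro mult_left_mono pe_abs) (use Cons.prems in auto)
  have t2: "\<bar>a * (pe (c'#cs) x - pe (c'#cs) a)\<bar> \<le> b * (\<bar>x - a\<bar> * pe (dl 1 cs) b)"
    unfolding abs_mult by (intro mult_mono IH) (use Cons.prems in auto)
  have "pe (dl 1 (c'#cs)) b = pe (map abs (c'#cs)) b + b * pe (dl 1 cs) b"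
    using pe_dl[of 1 cs b] by (simp add: algebra_simps)
  then have "\<bar>x - a\<bar> * pe (dl 1 (c'#cs)) b = \<bar>x - a\<bar> * pe (map abs (c'#cs)) b + b * (\<bar>x - a\<bar> * pe (dl 1 cs) b)"
    by (simp add: algebra_simps)
  then show ?case unfolding e using t1 t2 abs_triangle_ineq[of "(x - a) * pe (c'#cs) x" "a * (pe (c'#cs) x - pe (c'#cs) a)"]
    by linarith
qed

fun chk :: "real list \<Rightarrow> real list \<Rightarrow> bool" where
  "chk Q (a#b#ps) = ((a \<le> b \<and> (\<forall>x. a \<le> x \<and> x \<le> b \<longrightarrow> pe Q x < 0)) \<and> chk Q (b#ps))"
| "chk Q _ = True"

lemma chk_sound:
  assumes "chk Q (a#ps)" "ps \<noteq> []" "a \<le> x" "x \<le> last (a#ps)"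
  shows "pe Q x < 0"
  using assms
proof (induction ps arbitrary: a)
  case Nil then show ?case by simp
next
  case (Cons b ps)
  have h: "\<forall>x. a \<le> x \<and> x \<le> b \<longrightarrow> pe Q x < 0" and r: "chk Q (b#ps)"
    using Cons.prems(1) by auto
  show ?case
  proof (cases "x \<le> b")
    case True
    then show ?thesis using h Cons.prems by auto
  next
    case False
    then have "ps \<noteq> []" using Cons.prems(4) by auto
    then show ?thesis using Cons.IH[OF r] Cons.prems False by auto
  qed
qed

lemma iv_lemma:
  assumes "0 \<le> a" "a \<le> x" "x \<le> b"
    and "list_all2 (\<le>) (dl 1 cs) D"
    and "pe (c#cs) a \<le> U" "pe D b \<le> W" "U + (b - a) * W < 0"
  shows "pe (c#cs) x < 0"
proof -
  have "\<bar>pe (c#cs) x - pe (c#cs) a\<bar> \<le> \<bar>x - a\<bar> * pe (dl 1 cs) b"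
    by (rule pe_lip) (use assms in auto)
  moreover have "\<bar>x - a\<bar> * pe (dl 1 cs) b \<le> (b - a) * pe (dl 1 cs) b"
    by (intro mult_right_mono pe_dl_nonneg) (use assms in auto)
  moreover have "pe (dl 1 cs) b \<le> pe D b"
    by (rule pe_mono) (use assms in auto)
  moreover have "(b - a) * pe (dl 1 cs) b \<le> (b - a) * pe D b"
    by (rule mult_left_mono[OF calculation(3)]) (use assms in auto)
  moreover have "(b - a) * pe D b \<le> (b - a) * W"
    by (rule mult_left_mono) (use assms in auto)
  ultimately show ?thesis using assms by linarith
qed

lemma replicate_num: "replicate (numeral k) x = x # replicate (pred_numeral k) x"
  by (simp add: numeral_eq_Suc)

lemma sum_pe: "(\<Sum>m<n. c m * x^m) = pe (map c [0..<n]) x"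
proof (induction n arbitrary: c)
  case 0 then show ?case by simp
next
  case (Suc n)
  have "(\<Sum>m<Suc n. c m * x^m) = c 0 + x * (\<Sum>m<n. c (Suc m) * x^m)"
    by (subst sum.lessThan_Suc_shift) (simp add: sum_distrib_left mult.assoc mult.left_commute)
  also have "\<dots> = pe (map c [0..<Suc n]) x"
    using Suc[of "\<lambda>m. c (Suc m)"]
    by (simp add: upt_conv_Cons map_Suc_upt[symmetric] comp_def del: upt_Suc)
  finally show ?case .
qed

lemma cos_bound: "\<bar>cos x - (\<Sum>m<n. cos_coeff m * x^m)\<bar> \<le> inverse (fact n) * \<bar>x\<bar>^n"
proof -
  define S where "S = (\<Sum>m<n. cos_coeff m * x^m)"
  obtain t where t: "cos x = S + (cos (t + 1/2 * real n * pi) / fact n) * x ^ n"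
    using Maclaurin_cos_expansion[of x n] unfolding S_def by blast
  define w where "w = cos (t + 1/2 * real n * pi)"
  have "cos x - S = w / fact n * x^n" using t unfolding w_def by linarith
  then have "\<bar>cos x - S\<bar> = \<bar>w\<bar> / fact n * \<bar>x\<bar>^n" by (simp add: abs_mult power_abs)
  also have "\<dots> \<le> 1 / fact n * \<bar>x\<bar>^n"
    by (intro mult_right_mono divide_right_mono) (auto simp: w_def)
  finally show ?thesis by (simp add: S_def divide_inverse)
qed

definition QL :: "real list" where "QL = [(-24787763935445 / 1180591620717411303424), 0, 18027464680325 / 18889465931478580854784, 0, (-25885590310209 / 1208925819614629174706176), 0, 12209076608897 / 38685626227668133590597632, 0, (-33974480231947 / 9903520314283042199192993792), 0, 18546483178753 / 633825300114114700748351602688, 0, (-33019398448699 / 162259276829213363391578010288128), 0, 12297812665569 / 10384593717069655257060992658440192, 0, (-31244338752601 / 5316911983139663491615228241121378304), 0, 34336022195357 / 1361129467683753853853498429727072845824, 0, (-33021991357785 / 348449143727040986586495598010130648530944), 0, 28058432576509 / 89202980794122492566142873090593446023921664, 0, (-21233585275405 / 22835963083295358096932575511191922182123945984), 0, 450341040605 / 182687704666362864775460604089535377456991567872, 0, (-17649298023559 / 2993155353253689176481146537402947624255349848014848), 30425725034471 / 191561942608236107294793378393788647952342390272950272, 15212862594969 / 766247770432944429179173513575154591809369561091801088, 34228940663775 / 842498333348457493583344221469363458551160763204392890034487820288, (-23453163047401 / 421249166674228746791672110734681729275580381602196445017243910144), 20283816689645 / 1347997333357531989733350754350981533681857221127028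6240551805124608]"

definition TC1 :: "real list" where "TC1 = map cos_coeff [0..<44]"
definition TC2 :: "real list" where "TC2 = map (\<lambda>m. cos_coeff m * 2^m) [0..<44]"
definition TS1 :: "real list" where "TS1 = map sin_coeff [0..<44]"
definition TS2 :: "real list" where "TS2 = map (\<lambda>m. sin_coeff m * 2^m) [0..<44]"
definition ER :: "real list" where "ER = [(48 + 24*2^44) / fact 44, (48 + 3*2^44) / fact 44, 108 / fact 44, 28 / fact 44, 4 / fact 44]"

definition LT :: "real list" where "LT = padd (padd (padd (padd (padd [0,45,0,38,0,-2] (pmul [0,-48,0,28] TC1))
   (pmul [0,3] TC2)) (pmul [48,0,-108,0,4] TS1)) (pmul [-24] TS2)) (replicate 44 0 @ ER)"

lemma LT_QL: "list_all2 (\<le>) LT (replicate 15 0 @ QL)"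
  by (simp add: LT_def QL_def TC1_def TC2_def TS1_def TS2_def ER_def sin_coeff_def cos_coeff_def
      fact_numeral replicate_num upt_rec del: upt_Suc)

definition gg :: "real \<Rightarrow> real" where
  "gg x = 45*x + 38*x^3 - 2*x^5 + (28*x^3 - 48*x) * cos x + 3*x*cos (2*x)
     + (48 - 108*x^2 + 4*x^4) * sin x - 24 * sin (2*x)"

lemma gg_le_LT:
  assumes x0: "0 \<le> x"
  shows "gg x \<le> pe LT x"
proof -
  define e where "e = x^44 / fact 44"
  have e0: "0 \<le> e" unfolding e_def using x0 by simp
  have s1: "\<bar>sin x - pe TS1 x\<bar> \<le> e"
    using Maclaurin_sin_bound[of x 44] x0 unfolding e_def TS1_def sum_pe by (simp add: divide_inverse mult.commute)
  have c1: "\<bar>cos x - pe TC1 x\<bar> \<le> e"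
    using cos_bound[of x 44] x0 unfolding e_def TC1_def sum_pe by (simp add: divide_inverse mult.commute)
  have "(\<Sum>m<44. sin_coeff m * (2*x)^m) = (\<Sum>m<44. (sin_coeff m * 2^m) * x^m)"
    by (simp add: power_mult_distrib mult.assoc)
  then have s2: "\<bar>sin (2*x) - pe TS2 x\<bar> \<le> 2^44 * e"
    using Maclaurin_sin_bound[of "2*x" 44] x0 unfolding e_def TS2_def sum_pe
    by (simp add: divide_inverse mult.commute power_mult_distrib)
  have "(\<Sum>m<44. cos_coeff m * (2*x)^m) = (\<Sum>m<44. (cos_coeff m * 2^m) * x^m)"
    by (simp add: power_mult_distrib mult.assoc)
  then have c2: "\<bar>cos (2*x) - pe TC2 x\<bar> \<le> 2^44 * e"
    using cos_bound[of "2*x" 44] x0 unfolding e_def TC2_def sum_pe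
    by (simp add: divide_inverse mult.commute power_mult_distrib)
  have LTe: "pe LT x = (45*x + 38*x^3 - 2*x^5) + (28*x^3 - 48*x) * pe TC1 x + 3*x * pe TC2 x
      + (48 - 108*x^2 + 4*x^4) * pe TS1 x - 24 * pe TS2 x
      + e * ((48 + 24*2^44) + (48 + 3*2^44)*x + 108*x^2 + 28*x^3 + 4*x^4)"
    unfolding LT_def e_def by (simp add: pe_padd pe_pmul pe_map_mult pe_rep ER_def algebra_simps power_numeral_reduce)
  have b1: "(28*x^3 - 48*x) * (cos x - pe TC1 x) \<le> (28*x^3 + 48*x) * e"
  proof -
    have "\<bar>28*x^3 - 48*x\<bar> \<le> 28*x^3 + 48*x" using x0 by (simp add: abs_le_iff)
    then have "\<bar>28*x^3 - 48*x\<bar> * \<bar>cos x - pe TC1 x\<bar> \<le> (28*x^3 + 48*x) * e"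
      using c1 e0 by (intro mult_mono) auto
    moreover have "(28*x^3 - 48*x) * (cos x - pe TC1 x) \<le> \<bar>28*x^3 - 48*x\<bar> * \<bar>cos x - pe TC1 x\<bar>"
      by (simp only: abs_mult[symmetric] abs_ge_self)
    ultimately show ?thesis by linarith
  qed
  have b2: "(3*x) * (cos (2*x) - pe TC2 x) \<le> (3*x) * (2^44 * e)"
    using c2 x0 by (intro mult_left_mono) auto
  have b3: "(48 - 108*x^2 + 4*x^4) * (sin x - pe TS1 x) \<le> (48 + 108*x^2 + 4*x^4) * e"
  proof -
    have "\<bar>48 - 108*x^2 + 4*x^4\<bar> \<le> 48 + 108*x^2 + 4*x^4" by (simp add: abs_le_iff)
    then have "\<bar>48 - 108*x^2 + 4*x^4\<bar> * \<bar>sin x - pe TS1 x\<bar> \<le> (48 + 108*x^2 + 4*x^4) * e"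
      using s1 e0 by (intro mult_mono) auto
    moreover have "(48 - 108*x^2 + 4*x^4) * (sin x - pe TS1 x) \<le> \<bar>48 - 108*x^2 + 4*x^4\<bar> * \<bar>sin x - pe TS1 x\<bar>"
      by (simp only: abs_mult[symmetric] abs_ge_self)
    ultimately show ?thesis by linarith
  qed
  have b4: "-24 * (sin (2*x) - pe TS2 x) \<le> 24 * (2^44 * e)"
    using s2 by (simp add: abs_le_iff)
  have eq: "gg x - pe LT x = (28*x^3 - 48*x) * (cos x - pe TC1 x) + (3*x) * (cos (2*x) - pe TC2 x)
     + (48 - 108*x^2 + 4*x^4) * (sin x - pe TS1 x) + (-24 * (sin (2*x) - pe TS2 x))
     - ((28*x^3 + 48*x) * e + (3*x) * (2^44 * e) + (48 + 108*x^2 + 4*x^4) * e + 24 * (2^44 * e))"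
    unfolding LTe gg_def by (simp add: algebra_simps)
  show ?thesis using eq b1 b2 b3 b4 by linarith
qed

lemma gg_QL: "0 \<le> x \<Longrightarrow> gg x \<le> x^15 * pe QL x"
  using gg_le_LT[of x] pe_mono[OF LT_QL, of x] pe_rep[of 15 QL x] by simp

lemma QL_cons: "QL = hd QL # tl QL"
  by (rule list.collapse[symmetric]) (simp add: QL_def)

lemma QL_small:
  assumes "0 \<le> x" "x \<le> 243/64"
  shows "pe QL x < 0"
proof -
  have num: "hd QL + 243/64 * pe (map abs (tl QL)) (243/64) < 0"
    by (simp add: QL_def)
  have "\<bar>x * pe (tl QL) x\<bar> \<le> 243/64 * pe (map abs (tl QL)) (243/64)"
    unfolding abs_mult using assms by (intro mult_mono pe_abs pe_abs_nonneg) auto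
  then have "pe (hd QL # tl QL) x < 0" using num by simp
  then show ?thesis by (simp only: QL_cons[symmetric])
qed

definition DQ :: "real list" where "DQ = [0, 18027464680325 / 9444732965739290427392, 0, 25885590310209 / 302231454903657293676544, 0, 36627229826691 / 19342813113834066795298816, 0, 33974480231947 / 1237940039285380274899124224, 0, 92732415893765 / 316912650057057350374175801344, 0, 99058195346097 / 40564819207303340847894502572032, 0, 86084688658983 / 5192296858534827628530496329220096, 0, 31244338752601 / 332306998946228968225951765070086144, 0, 309024199758213 / 680564733841876926926749214863536422912, 0, 165109956788925 / 87112285931760246646623899502532662132736, 0, 308642758341599 / 44601490397061246283071436545296723011960832, 0, 63700755826215 / 2854495385411919762116571938898990272765493248, 0, 5854433527865 / 91343852333181432387730302044767688728495783936, 0, 123545086164913 / 748288838313422294120286634350736906063837462003712, 882346025999659 / 191561942608236107294793378393788647952342390272950272, 228192938924535 / 383123885216472214589586756787577295904684780545900544, 1061097160577025 / 842498333348457493583344221469363458551160763204392890034487820288, 23453163047401 / 13164036458569648337239753460458804039861886925068638906788872192, 669365950758285 / 13479973333575319897333507543509815336818572211270286240551805124608]"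

lemma DQ_ok: "list_all2 (\<le>) (dl 1 (tl QL)) DQ"
  by (simp add: QL_def DQ_def)

lemma iv_0: "\<forall>x. 243 / 64 \<le> x \<and> x \<le> 275 / 64 \<longrightarrow> pe QL x < 0"
proof (intro allI impI)
  fix x :: real assume x: "243 / 64 \<le> x \<and> x \<le> 275 / 64"
  have n: "pe (hd QL # tl QL) (243 / 64) \<le> (-6121391 / 562949953421312)" unfolding QL_cons[symmetric] by (simp add: QL_def)
  have w: "pe DQ (275 / 64) \<le> 21036285 / 1125899906842624" by (simp add: DQ_def)
  have "pe (hd QL # tl QL) x < 0"
    by (rule iv_lemma[where a="243 / 64" and b="275 / 64" and U="(-6121391 / 562949953421312)" and W="21036285 / 1125899906842624"]) (use x n w DQ_ok in auto)
  then show "pe QL x < 0" by (simp only: QL_cons[symmetric])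
qed

lemma iv_1: "\<forall>x. 275 / 64 \<le> x \<and> x \<le> 291 / 64 \<longrightarrow> pe QL x < 0"
proof (intro allI impI)
  fix x :: real assume x: "275 / 64 \<le> x \<and> x \<le> 291 / 64"
  have n: "pe (hd QL # tl QL) (275 / 64) \<le> (-1271053 / 140737488355328)" unfolding QL_cons[symmetric] by (simp add: QL_def)
  have w: "pe DQ (291 / 64) \<le> 24549385 / 1125899906842624" by (simp add: DQ_def)
  have "pe (hd QL # tl QL) x < 0"
    by (rule iv_lemma[where a="275 / 64" and b="291 / 64" and U="(-1271053 / 140737488355328)" and W="24549385 / 1125899906842624"]) (use x n w DQ_ok in auto)
  then show "pe QL x < 0" by (simp only: QL_cons[symmetric])
qed

lemma iv_2: "\<forall>x. 291 / 64 \<le> x \<and> x \<le> 307 / 64 \<longrightarrow> pe QL x < 0"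
proof (intro allI impI)
  fix x :: real assume x: "291 / 64 \<le> x \<and> x \<le> 307 / 64"
  have n: "pe (hd QL # tl QL) (291 / 64) \<le> (-9186101 / 1125899906842624)" unfolding QL_cons[symmetric] by (simp add: QL_def)
  have w: "pe DQ (307 / 64) \<le> 14358107 / 562949953421312" by (simp add: DQ_def)
  have "pe (hd QL # tl QL) x < 0"
    by (rule iv_lemma[where a="291 / 64" and b="307 / 64" and U="(-9186101 / 1125899906842624)" and W="14358107 / 562949953421312"]) (use x n w DQ_ok in auto)
  then show "pe QL x < 0" by (simp only: QL_cons[symmetric])
qed

lemma iv_3: "\<forall>x. 307 / 64 \<le> x \<and> x \<le> 315 / 64 \<longrightarrow> pe QL x < 0"
proof (intro allI impI)
  fix x :: real assume x: "307 / 64 \<le> x \<and> x \<le> 315 / 64"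
  have n: "pe (hd QL # tl QL) (307 / 64) \<le> (-8250085 / 1125899906842624)" unfolding QL_cons[symmetric] by (simp add: QL_def)
  have w: "pe DQ (315 / 64) \<le> 31087779 / 1125899906842624" by (simp add: DQ_def)
  have "pe (hd QL # tl QL) x < 0"
    by (rule iv_lemma[where a="307 / 64" and b="315 / 64" and U="(-8250085 / 1125899906842624)" and W="31087779 / 1125899906842624"]) (use x n w DQ_ok in auto)
  then show "pe QL x < 0" by (simp only: QL_cons[symmetric])
qed

lemma iv_4: "\<forall>x. 315 / 64 \<le> x \<and> x \<le> 323 / 64 \<longrightarrow> pe QL x < 0"
proof (intro allI impI)
  fix x :: real assume x: "315 / 64 \<le> x \<and> x \<le> 323 / 64"
  have n: "pe (hd QL # tl QL) (315 / 64) \<le> (-15602457 / 2251799813685248)" unfolding QL_cons[symmetric] by (simp add: QL_def)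
  have w: "pe DQ (323 / 64) \<le> 16839129 / 562949953421312" by (simp add: DQ_def)
  have "pe (hd QL # tl QL) x < 0"
    by (rule iv_lemma[where a="315 / 64" and b="323 / 64" and U="(-15602457 / 2251799813685248)" and W="16839129 / 562949953421312"]) (use x n w DQ_ok in auto)
  then show "pe QL x < 0" by (simp only: QL_cons[symmetric])
qed

lemma iv_5: "\<forall>x. 323 / 64 \<le> x \<and> x \<le> 331 / 64 \<longrightarrow> pe QL x < 0"
proof (intro allI impI)
  fix x :: real assume x: "323 / 64 \<le> x \<and> x \<le> 331 / 64"
  have n: "pe (hd QL # tl QL) (323 / 64) \<le> (-29463663 / 4503599627370496)" unfolding QL_cons[symmetric] by (simp add: QL_def)
  have w: "pe DQ (331 / 64) \<le> 9127649 / 281474976710656" by (simp add: DQ_def)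
  have "pe (hd QL # tl QL) x < 0"
    by (rule iv_lemma[where a="323 / 64" and b="331 / 64" and U="(-29463663 / 4503599627370496)" and W="9127649 / 281474976710656"]) (use x n w DQ_ok in auto)
  then show "pe QL x < 0" by (simp only: QL_cons[symmetric])
qed

lemma iv_6: "\<forall>x. 331 / 64 \<le> x \<and> x \<le> 339 / 64 \<longrightarrow> pe QL x < 0"
proof (intro allI impI)
  fix x :: real assume x: "331 / 64 \<le> x \<and> x \<le> 339 / 64"
  have n: "pe (hd QL # tl QL) (331 / 64) \<le> (-27778485 / 4503599627370496)" unfolding QL_cons[symmetric] by (simp add: QL_def)
  have w: "pe DQ (339 / 64) \<le> 1237823 / 35184372088832" by (simp add: DQ_def)
  have "pe (hd QL # tl QL) x < 0"
    by (rule iv_lemma[where a="331 / 64" and b="339 / 64" and U="(-27778485 / 4503599627370496)" and W="1237823 / 35184372088832"]) (use x n w DQ_ok in auto)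
  then show "pe QL x < 0" by (simp only: QL_cons[symmetric])
qed

lemma iv_7: "\<forall>x. 339 / 64 \<le> x \<and> x \<le> 347 / 64 \<longrightarrow> pe QL x < 0"
proof (intro allI impI)
  fix x :: real assume x: "339 / 64 \<le> x \<and> x \<le> 347 / 64"
  have n: "pe (hd QL # tl QL) (339 / 64) \<le> (-13075471 / 2251799813685248)" unfolding QL_cons[symmetric] by (simp add: QL_def)
  have w: "pe DQ (347 / 64) \<le> 21502971 / 562949953421312" by (simp add: DQ_def)
  have "pe (hd QL # tl QL) x < 0"
    by (rule iv_lemma[where a="339 / 64" and b="347 / 64" and U="(-13075471 / 2251799813685248)" and W="21502971 / 562949953421312"]) (use x n w DQ_ok in auto)
  then show "pe QL x < 0" by (simp only: QL_cons[symmetric])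
qed

lemma iv_8: "\<forall>x. 347 / 64 \<le> x \<and> x \<le> 355 / 64 \<longrightarrow> pe QL x < 0"
proof (intro allI impI)
  fix x :: real assume x: "347 / 64 \<le> x \<and> x \<le> 355 / 64"
  have n: "pe (hd QL # tl QL) (347 / 64) \<le> (-12291133 / 2251799813685248)" unfolding QL_cons[symmetric] by (simp add: QL_def)
  have w: "pe DQ (355 / 64) \<le> 23364573 / 562949953421312" by (simp add: DQ_def)
  have "pe (hd QL # tl QL) x < 0"
    by (rule iv_lemma[where a="347 / 64" and b="355 / 64" and U="(-12291133 / 2251799813685248)" and W="23364573 / 562949953421312"]) (use x n w DQ_ok in auto)
  then show "pe QL x < 0" by (simp only: QL_cons[symmetric])
qed

lemma iv_9: "\<forall>x. 355 / 64 \<le> x \<and> x \<le> 359 / 64 \<longrightarrow> pe QL x < 0"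
proof (intro allI impI)
  fix x :: real assume x: "355 / 64 \<le> x \<and> x \<le> 359 / 64"
  have n: "pe (hd QL # tl QL) (355 / 64) \<le> (-721043 / 140737488355328)" unfolding QL_cons[symmetric] by (simp add: QL_def)
  have w: "pe DQ (359 / 64) \<le> 12181127 / 281474976710656" by (simp add: DQ_def)
  have "pe (hd QL # tl QL) x < 0"
    by (rule iv_lemma[where a="355 / 64" and b="359 / 64" and U="(-721043 / 140737488355328)" and W="12181127 / 281474976710656"]) (use x n w DQ_ok in auto)
  then show "pe QL x < 0" by (simp only: QL_cons[symmetric])
qed

lemma iv_10: "\<forall>x. 359 / 64 \<le> x \<and> x \<le> 363 / 64 \<longrightarrow> pe QL x < 0"
proof (intro allI impI)
  fix x :: real assume x: "359 / 64 \<le> x \<and> x \<le> 363 / 64"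
  have n: "pe (hd QL # tl QL) (359 / 64) \<le> (-22341555 / 4503599627370496)" unfolding QL_cons[symmetric] by (simp add: QL_def)
  have w: "pe DQ (363 / 64) \<le> 25407681 / 562949953421312" by (simp add: DQ_def)
  have "pe (hd QL # tl QL) x < 0"
    by (rule iv_lemma[where a="359 / 64" and b="363 / 64" and U="(-22341555 / 4503599627370496)" and W="25407681 / 562949953421312"]) (use x n w DQ_ok in auto)
  then show "pe QL x < 0" by (simp only: QL_cons[symmetric])
qed

lemma iv_11: "\<forall>x. 363 / 64 \<le> x \<and> x \<le> 367 / 64 \<longrightarrow> pe QL x < 0"
proof (intro allI impI)
  fix x :: real assume x: "363 / 64 \<le> x \<and> x \<le> 367 / 64"
  have n: "pe (hd QL # tl QL) (363 / 64) \<le> (-2703111 / 562949953421312)" unfolding QL_cons[symmetric] by (simp add: QL_def)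
  have w: "pe DQ (367 / 64) \<le> 26503391 / 562949953421312" by (simp add: DQ_def)
  have "pe (hd QL # tl QL) x < 0"
    by (rule iv_lemma[where a="363 / 64" and b="367 / 64" and U="(-2703111 / 562949953421312)" and W="26503391 / 562949953421312"]) (use x n w DQ_ok in auto)
  then show "pe QL x < 0" by (simp only: QL_cons[symmetric])
qed

lemma iv_12: "\<forall>x. 367 / 64 \<le> x \<and> x \<le> 371 / 64 \<longrightarrow> pe QL x < 0"
proof (intro allI impI)
  fix x :: real assume x: "367 / 64 \<le> x \<and> x \<le> 371 / 64"
  have n: "pe (hd QL # tl QL) (367 / 64) \<le> (-1307713 / 281474976710656)" unfolding QL_cons[symmetric] by (simp add: QL_def)
  have w: "pe DQ (371 / 64) \<le> 6913017 / 140737488355328" by (simp add: DQ_def)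
  have "pe (hd QL # tl QL) x < 0"
    by (rule iv_lemma[where a="367 / 64" and b="371 / 64" and U="(-1307713 / 281474976710656)" and W="6913017 / 140737488355328"]) (use x n w DQ_ok in auto)
  then show "pe QL x < 0" by (simp only: QL_cons[symmetric])
qed

lemma iv_13: "\<forall>x. 371 / 64 \<le> x \<and> x \<le> 375 / 64 \<longrightarrow> pe QL x < 0"
proof (intro allI impI)
  fix x :: real assume x: "371 / 64 \<le> x \<and> x \<le> 375 / 64"
  have n: "pe (hd QL # tl QL) (371 / 64) \<le> (-10118565 / 2251799813685248)" unfolding QL_cons[symmetric] by (simp add: QL_def)
  have w: "pe DQ (375 / 64) \<le> 7214137 / 140737488355328" by (simp add: DQ_def)
  have "pe (hd QL # tl QL) x < 0"
    by (rule iv_lemma[where a="371 / 64" and b="375 / 64" and U="(-10118565 / 2251799813685248)" and W="7214137 / 140737488355328"]) (use x n w DQ_ok in auto)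
  then show "pe QL x < 0" by (simp only: QL_cons[symmetric])
qed

lemma iv_14: "\<forall>x. 375 / 64 \<le> x \<and> x \<le> 379 / 64 \<longrightarrow> pe QL x < 0"
proof (intro allI impI)
  fix x :: real assume x: "375 / 64 \<le> x \<and> x \<le> 379 / 64"
  have n: "pe (hd QL # tl QL) (375 / 64) \<le> (-19566051 / 4503599627370496)" unfolding QL_cons[symmetric] by (simp add: QL_def)
  have w: "pe DQ (379 / 64) \<le> 3764979 / 70368744177664" by (simp add: DQ_def)
  have "pe (hd QL # tl QL) x < 0"
    by (rule iv_lemma[where a="375 / 64" and b="379 / 64" and U="(-19566051 / 4503599627370496)" and W="3764979 / 70368744177664"]) (use x n w DQ_ok in auto)
  then show "pe QL x < 0" by (simp only: QL_cons[symmetric])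
qed

lemma iv_15: "\<forall>x. 379 / 64 \<le> x \<and> x \<le> 383 / 64 \<longrightarrow> pe QL x < 0"
proof (intro allI impI)
  fix x :: real assume x: "379 / 64 \<le> x \<and> x \<le> 383 / 64"
  have n: "pe (hd QL # tl QL) (379 / 64) \<le> (-4727539 / 1125899906842624)" unfolding QL_cons[symmetric] by (simp add: QL_def)
  have w: "pe DQ (383 / 64) \<le> 31445093 / 562949953421312" by (simp add: DQ_def)
  have "pe (hd QL # tl QL) x < 0"
    by (rule iv_lemma[where a="379 / 64" and b="383 / 64" and U="(-4727539 / 1125899906842624)" and W="31445093 / 562949953421312"]) (use x n w DQ_ok in auto)
  then show "pe QL x < 0" by (simp only: QL_cons[symmetric])
qed

lemma iv_16: "\<forall>x. 383 / 64 \<le> x \<and> x \<le> 6 \<longrightarrow> pe QL x < 0"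
proof (intro allI impI)
  fix x :: real assume x: "383 / 64 \<le> x \<and> x \<le> 6"
  have n: "pe (hd QL # tl QL) (383 / 64) \<le> (-9134705 / 2251799813685248)" unfolding QL_cons[symmetric] by (simp add: QL_def)
  have w: "pe DQ (6) \<le> 15893241 / 281474976710656" by (simp add: DQ_def)
  have "pe (hd QL # tl QL) x < 0"
    by (rule iv_lemma[where a="383 / 64" and b="6" and U="(-9134705 / 2251799813685248)" and W="15893241 / 281474976710656"]) (use x n w DQ_ok in auto)
  then show "pe QL x < 0" by (simp only: QL_cons[symmetric])
qed

lemma QL_mid:
  assumes "243/64 \<le> x" "x \<le> 6"
  shows "pe QL x < 0"
proof -
  have "chk QL [243 / 64, 275 / 64, 291 / 64, 307 / 64, 315 / 64, 323 / 64, 331 / 64, 339 / 64, 347 / 64, 355 / 64, 359 / 64, 363 / 64, 367 / 64, 371 / 64, 375 / 64, 379 / 64, 383 / 64, 6]"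
    unfolding chk.simps using iv_0 iv_1 iv_2 iv_3 iv_4 iv_5 iv_6 iv_7 iv_8 iv_9 iv_10 iv_11 iv_12 iv_13 iv_14 iv_15 iv_16 by simp
  then show ?thesis by (rule chk_sound) (use assms in auto)
qed

lemma gg_big:
  assumes x6: "6 \<le> x"
  shows "gg x < 0"
proof -
  define c where "c = cos x"
  define s where "s = sin x"
  define B where "B = 28*x^3 - 48*x"
  define D where "D = 48 - 108*x^2 + 4*x^4"
  define K where "K = 2*x^5 - 38*x^3 - 48*x - 24"
  have cs1: "c^2 + s^2 = 1" unfolding c_def s_def by (simp add: add.commute)
  have g: "gg x = 45*x + 38*x^3 - 2*x^5 + B*c + 3*x*(2*c^2 - 1) + D*s - 48*(s*c)"
    unfolding gg_def c_def s_def B_def D_def cos_double_cos sin_double by (simp add: algebra_simps)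
  have t1: "3*x*(2*c^2 - 1) \<le> 3*x"
  proof -
    have "c^2 \<le> 1" using cs1 zero_le_power2[of s] by linarith
    then show ?thesis using x6 by (simp add: mult_left_le)
  qed
  have t2: "-48*(s*c) \<le> 24"
  proof -
    have "0 \<le> (s+c)^2" by simp
    then have "0 \<le> s^2 + c^2 + 2*(s*c)" by (simp add: power2_sum)
    then show ?thesis using cs1 by linarith
  qed
  have cauchy: "(B*c + D*s)^2 \<le> B^2 + D^2"
  proof -
    have "(B^2 + D^2) * (c^2 + s^2) - (B*c + D*s)^2 = (B*s - D*c)^2"
      by (simp add: power2_eq_square algebra_simps)
    then have "(B^2 + D^2) - (B*c + D*s)^2 = (B*s - D*c)^2" using cs1 by simp
    moreover have "0 \<le> (B*s - D*c)^2" by simp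
    ultimately show ?thesis by linarith
  qed
  define y where "y = x - 6"
  have y: "x = y + 6" "0 \<le> y" using x6 unfolding y_def by auto
  have Ky: "K = 7032 + 8808*y + 3636*y^2 + 682*y^3 + 60*y^4 + 2*y^5"
    unfolding K_def y(1) by (simp add: power_numeral_reduce algebra_simps)
  have Fy: "K^2 - B^2 - D^2 = 14465088 + 83786112*y + 107357184*y^2 + 66797088*y^3 + 24660768*y^4
      + 5853936*y^5 + 920628*y^6 + 95616*y^7 + 6312*y^8 + 240*y^9 + 4*y^10"
    unfolding K_def B_def D_def y(1) by (simp add: power_numeral_reduce power2_eq_square algebra_simps)
  have p: "0 \<le> y^2" "0 \<le> y^3" "0 \<le> y^4" "0 \<le> y^5" "0 \<le> y^6" "0 \<le> y^7" "0 \<le> y^8" "0 \<le> y^9" "0 \<le> y^10"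
    using y(2) by simp_all
  have K0: "0 < K" unfolding Ky using p y(2) by linarith
  have BD: "B^2 + D^2 < K^2" using Fy p y(2) by linarith
  have lt: "B*c + D*s < K"
  proof (cases "B*c + D*s \<le> 0")
    case True then show ?thesis using K0 by linarith
  next
    case False
    have sq: "(B*c + D*s)^2 < K^2" using cauchy BD by linarith
    have "0 \<le> K" using K0 by simp
    with sq show ?thesis by (rule power_less_imp_less_base)
  qed
  show ?thesis using g t1 t2 lt unfolding K_def by linarith
qed

lemma gg_neg: "0 < x \<Longrightarrow> gg x < 0"
proof (cases "x \<le> 6")
  case True
  assume x0: "0 < x"
  have "pe QL x < 0"
  proof (cases "x \<le> 243/64")
    case True then show ?thesis using x0 QL_small by simp
  next
    case False then show ?thesis using \<open>x \<le> 6\<close> QL_mid by simp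
  qed
  moreover have "0 < x^15" using x0 by simp
  ultimately have "x^15 * pe QL x < 0" by (simp add: mult_pos_neg)
  then show ?thesis using gg_QL[of x] x0 by linarith
next
  case False then show ?thesis using gg_big by simp
qed

theorem lemma5p4:
  fixes u :: real
  assumes "u > 0"
  shows "45*u + 608*u^3 - 512*u^5 + 16*u*(28*u^2 - 3)*cos (4*u) + 3*u*cos (8*u)
         + 12*sin (4*u) - 432*u^2*sin (4*u) + 256*u^4*sin (4*u) - 6*sin (8*u) < 0"
proof -
  have e: "45*u + 608*u^3 - 512*u^5 + 16*u*(28*u^2 - 3)*cos (4*u) + 3*u*cos (8*u)
         + 12*sin (4*u) - 432*u^2*sin (4*u) + 256*u^4*sin (4*u) - 6*sin (8*u) = gg (4*u) / 4"
    unfolding gg_def by (simp add: power_mult_distrib power2_eq_square power3_eq_cube algebra_simps)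
  have "gg (4*u) < 0" using gg_neg assms by simp
  then show ?thesis unfolding e by simp
qed

end
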